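(* If two ordered forests $\mathcal F,\mathcal F'$ have the same underlying unlabelled rooted forest, then the commutative images $\phi(R_{\mathcal F})$ and $\phi(R_{\mathcal F'})$ (with $\phi:a_{ij}\mapsto x_{ij}$ applied to the realization) are equal. Writing $R^{\overline{\mathcal F}}$ for this common image, where $\overline{\mathcal F}$ is the underlying rooted forest, the elements $R^{\overline{\mathcal F}}$, $\overline{\mathcal F}$ ranging over all rooted forests, form a basis of the (realized) Connes–Kreimer Hopf algebra.
   Context: An ordered forest on $n$ vertices is a rooted forest with vertex set $[n]$ (labels unrelated to the structure); its edge set $E(\mathcal F)$ consists of the pairs $(l,p(l))$, $p$ the parent map. $\mathcal G\le\mathcal F$ iff $E(\mathcal F)\subseteq E(\mathcal G)$ (both on $[n]$). First realization: $A=\{a_{ij}:0\le i<j\}$ with $a_{ij}\prec a_{kl}$ iff $j=k$; $S^{\mathcal F}$ is the sum of words $w_1\cdots w_n$ over $A$ with $w_k\prec w_l$ whenever $k$ is the parent of $l$. $R_{\mathcal F}=\sum_{\mathcal G\le\mathcal F}(-1)^{|E(\mathcal F)|-|E(\mathcal G)|}S^{\mathcal G}$. $\phi$ sends $a_{ij}$ to commuting indeterminates $x_{ij}$; $\phi(S^{\mathcal F})$ depends only on the underlying rooted forest, and the span of the $\phi(S^{\mathcal F})$ is a realization of the Connes–Kreimer Hopf algebra, in which $\phi(S^{\mathcal F})$ for distinct underlying rooted forests are linearly independent. *)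

theory Defs
  imports Main "HOL-Library.Multiset"
begin

text \<open>An ordered forest on n vertices: vertex set {1..n}, parent map p (None = root).\<close>

definition forest_edges :: "(nat \<Rightarrow> nat option) \<Rightarrow> (nat \<times> nat) set" where
  "forest_edges p = {(l, k). p l = Some k}"

definition ordered_forest :: "nat \<Rightarrow> (nat \<Rightarrow> nat option) \<Rightarrow> bool" where
  "ordered_forest n p \<longleftrightarrow>
     (\<forall>l k. p l = Some k \<longrightarrow> l \<in> {1..n} \<and> k \<in> {1..n}) \<and> acyclic (forest_edges p)"

definition same_underlying :: "nat \<Rightarrow> (nat \<Rightarrow> nat option) \<Rightarrow> (nat \<Rightarrow> nat option) \<Rightarrow> bool" where
  "same_underlying n p p' \<longleftrightarrow>
     (\<exists>\<sigma>. bij_betw \<sigma> {1..n} {1..n} \<and> (\<forall>l\<in>{1..n}. p' (\<sigma> l) = map_option \<sigma> (p l)))"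

text \<open>Letters a_ij are pairs (i,j) with i < j; a_ij precedes a_kl iff j = k.\<close>
definition letter_prec :: "nat \<times> nat \<Rightarrow> nat \<times> nat \<Rightarrow> bool" where
  "letter_prec a b \<longleftrightarrow> snd a = fst b"

text \<open>S^F as a formal series: coefficient of the word w (positions 1..n are w!0 .. w!(n-1)).\<close>
definition S_series :: "nat \<Rightarrow> (nat \<Rightarrow> nat option) \<Rightarrow> (nat \<times> nat) list \<Rightarrow> 'k::comm_ring_1" where
  "S_series n p w =
     (if length w = n \<and> (\<forall>a\<in>set w. fst a < snd a) \<and>
         (\<forall>l k. p l = Some k \<longrightarrow> letter_prec (w ! (k - 1)) (w ! (l - 1)))
      then 1 else 0)"

definition R_series :: "nat \<Rightarrow> (nat \<Rightarrow> nat option) \<Rightarrow> (nat \<times> nat) list \<Rightarrow> 'k::comm_ring_1" where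
  "R_series n p w =
     (\<Sum>q\<in>{q. ordered_forest n q \<and> forest_edges p \<subseteq> forest_edges q}.
        (-1) ^ card (forest_edges q - forest_edges p) * S_series n q w)"

text \<open>phi: commutative image; a monomial in the x_ij is a multiset of pairs.\<close>
definition phi :: "((nat \<times> nat) list \<Rightarrow> 'k::comm_ring_1) \<Rightarrow> (nat \<times> nat) multiset \<Rightarrow> 'k" where
  "phi X m = (\<Sum>w\<in>{w. mset w = m}. X w)"

definition fspan :: "('a \<Rightarrow> 'k::comm_ring_1) set \<Rightarrow> ('a \<Rightarrow> 'k) set" where
  "fspan B = {(\<lambda>x. \<Sum>g\<in>t. r g * g x) | t r. finite t \<and> t \<subseteq> B}"

end

theory Submission
  imports Defs "HOL-Combinatorics.Permutations"
begin


definition conj :: "(nat\<Rightarrow>nat) \<Rightarrow> (nat \<Rightarrow> nat option) \<Rightarrow> nat \<Rightarrow> nat option" where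
  "conj \<sigma> q = (\<lambda>v. map_option \<sigma> (q (inv \<sigma> v)))"

lemma edges_iff: "(l,k) \<in> forest_edges p \<longleftrightarrow> p l = Some k"
  by (simp add: forest_edges_def)

lemma edges_conj2:
  assumes "\<sigma> permutes S"
  shows "(a,b) \<in> forest_edges (conj \<sigma> q) \<longleftrightarrow> (inv \<sigma> a, inv \<sigma> b) \<in> forest_edges q"
proof -
  have "map_option \<sigma> (q (inv \<sigma> a)) = Some b \<longleftrightarrow> q (inv \<sigma> a) = Some (inv \<sigma> b)"
    using permutes_inverses[OF assms] by (cases "q (inv \<sigma> a)") auto
  then show ?thesis by (simp add: edges_iff conj_def)
qed

lemma edges_conj:
  assumes "\<sigma> permutes S"
  shows "forest_edges (conj \<sigma> q) = map_prod \<sigma> \<sigma> ` forest_edges q"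
proof (rule set_eqI)
  fix x :: "nat \<times> nat"
  obtain a b where x: "x = (a,b)" by (cases x)
  have "(a,b) \<in> map_prod \<sigma> \<sigma> ` forest_edges q \<longleftrightarrow> (inv \<sigma> a, inv \<sigma> b) \<in> forest_edges q"
  proof
    assume "(a,b) \<in> map_prod \<sigma> \<sigma> ` forest_edges q"
    then obtain l k where "(l,k) \<in> forest_edges q" "a = \<sigma> l" "b = \<sigma> k" by auto
    then show "(inv \<sigma> a, inv \<sigma> b) \<in> forest_edges q" using permutes_inverses[OF assms] by simp
  next
    assume "(inv \<sigma> a, inv \<sigma> b) \<in> forest_edges q"
    then show "(a,b) \<in> map_prod \<sigma> \<sigma> ` forest_edges q"
      using permutes_inverses[OF assms] by (metis map_prod_simp rev_image_eqI)
  qed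
  then show "x \<in> forest_edges (conj \<sigma> q) \<longleftrightarrow> x \<in> map_prod \<sigma> \<sigma> ` forest_edges q"
    using edges_conj2[OF assms] x by simp
qed

lemma forest_edges_sub:
  assumes "ordered_forest n q" shows "forest_edges q \<subseteq> {1..n} \<times> {1..n}"
  using assms by (auto simp: ordered_forest_def forest_edges_def)

lemma forest_edges_finite:
  assumes "ordered_forest n q" shows "finite (forest_edges q)"
  using forest_edges_sub[OF assms] finite_subset by blast

lemma forest_conj:
  assumes "\<sigma> permutes {1..n}" "ordered_forest n q"
  shows "ordered_forest n (conj \<sigma> q)"
proof -
  have dom: "l \<in> {1..n} \<and> k \<in> {1..n}" if "conj \<sigma> q l = Some k" for l k
  proof -
    from that obtain k' where k': "q (inv \<sigma> l) = Some k'" "k = \<sigma> k'"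
      by (auto simp: conj_def)
    then have "inv \<sigma> l \<in> {1..n}" "k' \<in> {1..n}" using assms(2) by (auto simp: ordered_forest_def)
    then show ?thesis
      using k' permutes_in_image[OF assms(1)] permutes_inv[OF assms(1)] permutes_in_image[OF permutes_inv[OF assms(1)]]
      by auto
  qed
  have "forest_edges (conj \<sigma> q) = inv_image (forest_edges q) (inv \<sigma>)"
    using edges_conj2[OF assms(1)] by (auto simp: inv_image_def)
  moreover have "wf (forest_edges q)"
    using assms(2) forest_edges_finite finite_acyclic_wf by (auto simp: ordered_forest_def)
  ultimately have "acyclic (forest_edges (conj \<sigma> q))" by (simp add: wf_acyclic)
  then show ?thesis using dom by (auto simp: ordered_forest_def)
qed

lemma edges_inj:
  assumes "forest_edges p = forest_edges q" shows "p = q"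
proof
  fix l
  have "\<forall>k. p l = Some k \<longleftrightarrow> q l = Some k" using assms by (auto simp: forest_edges_def set_eq_iff)
  then show "p l = q l" by (metis not_None_eq)
qed

lemma alt_pow:
  assumes "finite D"
  shows "(\<Sum>U\<in>Pow D. (-1::'a::comm_ring_1) ^ card U) = (if D = {} then 1 else 0)"
  using assms
proof (induction D rule: finite_induct)
  case empty then show ?case by simp
next
  case (insert x D)
  have disj: "Pow D \<inter> insert x ` Pow D = {}" using insert by auto
  have inj: "inj_on (insert x) (Pow D)" using insert by (auto simp: inj_on_def)
  have "(\<Sum>U\<in>Pow (insert x D). (-1::'a) ^ card U)
      = (\<Sum>U\<in>Pow D. (-1::'a) ^ card U) + (\<Sum>U\<in>insert x ` Pow D. (-1::'a) ^ card U)"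
    by (simp add: Pow_insert sum.union_disjoint insert disj)
  also have "(\<Sum>U\<in>insert x ` Pow D. (-1::'a) ^ card U) = (\<Sum>U\<in>Pow D. (-1::'a) ^ card (insert x U))"
    by (simp add: sum.reindex inj)
  also have "\<dots> = (\<Sum>U\<in>Pow D. - ((-1::'a) ^ card U))"
  proof (rule sum.cong)
    fix U assume "U \<in> Pow D"
    then have "finite U" "x \<notin> U" using insert finite_subset by auto
    then show "(-1::'a) ^ card (insert x U) = - ((-1) ^ card U)" by simp
  qed simp
  finally show ?case by (simp add: sum_negf)
qed

lemma alt_pow2:
  assumes "finite D"
  shows "(\<Sum>U\<in>Pow D. (-1::'a::comm_ring_1) ^ card (D - U)) = (if D = {} then 1 else 0)"
proof -
  have "(\<Sum>U\<in>Pow D. (-1::'a::comm_ring_1) ^ card (D - U)) = (\<Sum>U\<in>Pow D. (-1::'a::comm_ring_1) ^ card U)"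
    by (rule sum.reindex_bij_witness[where i="\<lambda>U. D - U" and j="\<lambda>U. D - U"]) auto
  then show ?thesis using alt_pow[OF assms] by simp
qed

lemma alt_interval:
  assumes "finite B" "A \<subseteq> B"
  shows "(\<Sum>T | A \<subseteq> T \<and> T \<subseteq> B. (-1::'a::comm_ring_1) ^ card (T - A)) = (if A = B then 1 else 0)"
    and "(\<Sum>T | A \<subseteq> T \<and> T \<subseteq> B. (-1::'a::comm_ring_1) ^ card (B - T)) = (if A = B then 1 else 0)"
proof -
  have eq: "{T. A \<subseteq> T \<and> T \<subseteq> B} = (\<lambda>U. A \<union> U) ` Pow (B - A)"
  proof
    show "{T. A \<subseteq> T \<and> T \<subseteq> B} \<subseteq> (\<lambda>U. A \<union> U) ` Pow (B - A)"
    proof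
      fix T assume "T \<in> {T. A \<subseteq> T \<and> T \<subseteq> B}"
      then have "T = A \<union> (T - A)" "T - A \<in> Pow (B - A)" by auto
      then show "T \<in> (\<lambda>U. A \<union> U) ` Pow (B - A)" by blast
    qed
  qed (use assms in auto)
  have inj: "inj_on (\<lambda>U. A \<union> U) (Pow (B - A))" by (auto simp: inj_on_def)
  have fD: "finite (B - A)" using assms by simp
  have e: "B - A = {} \<longleftrightarrow> A = B" using assms by auto
  show "(\<Sum>T | A \<subseteq> T \<and> T \<subseteq> B. (-1::'a::comm_ring_1) ^ card (T - A)) = (if A = B then 1 else 0)"
  proof -
    have "(\<Sum>T | A \<subseteq> T \<and> T \<subseteq> B. (-1::'a) ^ card (T - A)) = (\<Sum>U\<in>Pow (B - A). (-1::'a) ^ card ((A \<union> U) - A))"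
      by (simp add: eq sum.reindex inj)
    also have "\<dots> = (\<Sum>U\<in>Pow (B - A). (-1::'a) ^ card U)"
    proof (rule sum.cong)
      fix U assume "U \<in> Pow (B - A)"
      then have "(A \<union> U) - A = U" by auto
      then show "(-1::'a) ^ card ((A \<union> U) - A) = (-1::'a) ^ card U" by simp
    qed simp
    finally show ?thesis using alt_pow[OF fD] e by simp
  qed
  show "(\<Sum>T | A \<subseteq> T \<and> T \<subseteq> B. (-1::'a::comm_ring_1) ^ card (B - T)) = (if A = B then 1 else 0)"
  proof -
    have "(\<Sum>T | A \<subseteq> T \<and> T \<subseteq> B. (-1::'a) ^ card (B - T)) = (\<Sum>U\<in>Pow (B - A). (-1::'a) ^ card (B - (A \<union> U)))"
      by (simp add: eq sum.reindex inj)
    also have "\<dots> = (\<Sum>U\<in>Pow (B - A). (-1::'a) ^ card ((B - A) - U))"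
    proof (rule sum.cong)
      fix U assume "U \<in> Pow (B - A)"
      have "B - (A \<union> U) = (B - A) - U" by auto
      then show "(-1::'a) ^ card (B - (A \<union> U)) = (-1::'a) ^ card ((B - A) - U)" by simp
    qed simp
    finally show ?thesis using alt_pow2[OF fD] e by simp
  qed
qed

lemma forests_finite: "finite {q. ordered_forest n q \<and> P q}"
proof -
  have "inj_on forest_edges {q. ordered_forest n q \<and> P q}" using edges_inj by (auto simp: inj_on_def)
  moreover have "forest_edges ` {q. ordered_forest n q \<and> P q} \<subseteq> Pow ({1..n} \<times> {1..n})"
    using forest_edges_sub by blast
  ultimately show ?thesis by (meson finite_Pow_iff finite_SigmaI finite_atLeastAtMost finite_subset inj_on_finite)
qed

lemma forest_interval:
  assumes "ordered_forest n b"
  shows "(\<Sum>h | ordered_forest n h \<and> A \<subseteq> forest_edges h \<and> forest_edges h \<subseteq> forest_edges b. f (forest_edges h))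
       = (\<Sum>T | A \<subseteq> T \<and> T \<subseteq> forest_edges b. f T)"
proof -
  let ?H = "{h. ordered_forest n h \<and> A \<subseteq> forest_edges h \<and> forest_edges h \<subseteq> forest_edges b}"
  have inj: "inj_on forest_edges ?H" using edges_inj by (auto simp: inj_on_def)
  have img: "forest_edges ` ?H = {T. A \<subseteq> T \<and> T \<subseteq> forest_edges b}"
  proof
    show "{T. A \<subseteq> T \<and> T \<subseteq> forest_edges b} \<subseteq> forest_edges ` ?H"
    proof
      fix T assume T: "T \<in> {T. A \<subseteq> T \<and> T \<subseteq> forest_edges b}"
      define h where "h = (\<lambda>l. if \<exists>k. (l,k) \<in> T then b l else None)"
      have Eh: "forest_edges h = T"
      proof (rule set_eqI)
        fix x :: "nat \<times> nat" obtain l k where x: "x = (l,k)" by (cases x)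
        have "(l,k) \<in> forest_edges h \<longleftrightarrow> (l,k) \<in> T"
          using T by (auto simp: h_def forest_edges_def)
        then show "x \<in> forest_edges h \<longleftrightarrow> x \<in> T" using x by simp
      qed
      have "ordered_forest n h"
        using assms Eh T unfolding ordered_forest_def
        by (auto simp: h_def split: if_splits intro: acyclic_subset)
      then show "T \<in> forest_edges ` ?H" using Eh T by blast
    qed
  qed auto
  show ?thesis using sum.reindex[OF inj, of f] img by simp
qed



lemma fspan_iff: "f \<in> fspan B \<longleftrightarrow> (\<exists>t r. f = (\<lambda>x. \<Sum>g\<in>t. r g * g x) \<and> finite t \<and> t \<subseteq> B)"
  by (simp add: fspan_def)

lemma fspan_zero: "(\<lambda>x. 0) \<in> fspan B"
  unfolding fspan_iff by (rule exI[of _ "{}"]) simp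

lemma fspan_base: "g \<in> B \<Longrightarrow> g \<in> fspan B"
  unfolding fspan_iff by (rule exI[of _ "{g}"], rule exI[of _ "\<lambda>_. 1"]) simp

lemma fspan_scale: "f \<in> fspan B \<Longrightarrow> (\<lambda>x. c * f x) \<in> fspan B"
proof -
  assume "f \<in> fspan B"
  then obtain t r where f: "f = (\<lambda>x. \<Sum>g\<in>t. r g * g x)" "finite t" "t \<subseteq> B" by (auto simp: fspan_iff)
  have "(\<lambda>x. c * f x) = (\<lambda>x. \<Sum>g\<in>t. (c * r g) * g x)"
    by (simp add: f sum_distrib_left mult.assoc)
  then show ?thesis unfolding fspan_iff using f
    by (intro exI[of _ t] exI[of _ "\<lambda>g. c * r g"]) simp
qed

lemma fspan_add: "f \<in> fspan B \<Longrightarrow> h \<in> fspan B \<Longrightarrow> (\<lambda>x. f x + h x) \<in> fspan B"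
proof -
  assume "f \<in> fspan B" "h \<in> fspan B"
  then obtain t1 r1 t2 r2 where f: "f = (\<lambda>x. \<Sum>g\<in>t1. r1 g * g x)" "finite t1" "t1 \<subseteq> B"
    and h: "h = (\<lambda>x. \<Sum>g\<in>t2. r2 g * g x)" "finite t2" "t2 \<subseteq> B" by (auto simp: fspan_iff)
  define r where "r = (\<lambda>g. (if g \<in> t1 then r1 g else 0) + (if g \<in> t2 then r2 g else 0))"
  have "(\<lambda>x. f x + h x) = (\<lambda>x. \<Sum>g\<in>t1 \<union> t2. r g * g x)"
  proof
    fix x
    have "(\<Sum>g\<in>t1 \<union> t2. r g * g x) = (\<Sum>g\<in>t1 \<union> t2. (if g \<in> t1 then r1 g * g x else 0) + (if g \<in> t2 then r2 g * g x else 0))"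
      by (rule sum.cong) (auto simp: r_def distrib_right)
    also have "\<dots> = (\<Sum>g\<in>t1 \<union> t2. (if g \<in> t1 then r1 g * g x else 0)) + (\<Sum>g\<in>t1 \<union> t2. (if g \<in> t2 then r2 g * g x else 0))"
      by (rule sum.distrib)
    also have "\<dots> = (\<Sum>g\<in>(t1 \<union> t2) \<inter> t1. r1 g * g x) + (\<Sum>g\<in>(t1 \<union> t2) \<inter> t2. r2 g * g x)"
      using f h sum.inter_restrict[where A="t1 \<union> t2" and B=t1 and g="\<lambda>g. r1 g * g x"]
        sum.inter_restrict[where A="t1 \<union> t2" and B=t2 and g="\<lambda>g. r2 g * g x"] by simp
    also have "(t1 \<union> t2) \<inter> t1 = t1" "(t1 \<union> t2) \<inter> t2 = t2" by auto
    then have "(\<Sum>g\<in>(t1 \<union> t2) \<inter> t1. r1 g * g x) + (\<Sum>g\<in>(t1 \<union> t2) \<inter> t2. r2 g * g x) = f x + h x"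
      using f h by simp
    finally show "f x + h x = (\<Sum>g\<in>t1 \<union> t2. r g * g x)" by simp
  qed
  then show ?thesis unfolding fspan_iff using f h by blast
qed

lemma fspan_sum:
  assumes "finite Q" "\<forall>i\<in>Q. h i \<in> fspan B"
  shows "(\<lambda>x. \<Sum>i\<in>Q. c i * h i x) \<in> fspan B"
  using assms
proof (induction Q rule: finite_induct)
  case empty then show ?case by (simp add: fspan_zero)
next
  case (insert i Q)
  then have "(\<lambda>x. c i * h i x + (\<Sum>i\<in>Q. c i * h i x)) \<in> fspan B"
    by (intro fspan_add fspan_scale) auto
  then show ?case using insert by simp
qed

lemma fspan_sub:
  assumes "B \<subseteq> fspan C" shows "fspan B \<subseteq> fspan C"
proof
  fix f assume "f \<in> fspan B"
  then obtain t r where f: "f = (\<lambda>x. \<Sum>g\<in>t. r g * g x)" "finite t" "t \<subseteq> B" by (auto simp: fspan_iff)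
  have "(\<lambda>x. \<Sum>g\<in>t. r g * id g x) \<in> fspan C"
    using f assms by (intro fspan_sum) auto
  then show "f \<in> fspan C" using f by simp
qed

lemma words_finite: "finite {w. mset w = m}"
proof -
  obtain xs where "mset xs = m" using ex_mset by blast
  then show ?thesis using mset_eq_finite[of xs] by simp
qed

lemma phi_lin:
  assumes "finite Q"
  shows "phi (\<lambda>w. \<Sum>q\<in>Q. c q * X q w) m = (\<Sum>q\<in>Q. c q * phi (X q) m)"
  unfolding phi_def using assms words_finite
  by (simp add: sum_distrib_left sum.swap[of _ Q])

lemma R_alt:
  "R_series n p w = (\<Sum>q\<in>{q. ordered_forest n q}. (if forest_edges p \<subseteq> forest_edges q then (-1) ^ card (forest_edges q - forest_edges p) * S_series n q w else 0))"
proof -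
  have fF: "finite {q. ordered_forest n q}" using forests_finite[of n "\<lambda>_. True"] by simp
  have "{q. ordered_forest n q \<and> forest_edges p \<subseteq> forest_edges q} = {q \<in> {q. ordered_forest n q}. forest_edges p \<subseteq> forest_edges q}"
    by auto
  then have "R_series n p w = (\<Sum>q\<in>{q \<in> {q. ordered_forest n q}. forest_edges p \<subseteq> forest_edges q}. (-1) ^ card (forest_edges q - forest_edges p) * S_series n q w)"
    unfolding R_series_def by simp
  also have "\<dots> = (\<Sum>q\<in>{q. ordered_forest n q}. (if forest_edges p \<subseteq> forest_edges q then (-1) ^ card (forest_edges q - forest_edges p) * S_series n q w else 0))"
    by (rule sum.inter_filter[OF fF])
  finally show ?thesis .
qed

lemma moebius:
  assumes p: "ordered_forest n p"
  shows "(S_series n p w :: 'k::comm_ring_1) = (\<Sum>q | ordered_forest n q \<and> forest_edges p \<subseteq> forest_edges q. R_series n q w)"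
proof -
  let ?F = "{q. ordered_forest n q}"
  let ?E = forest_edges
  have fF: "finite ?F" using forests_finite[of n "\<lambda>_. True"] by simp
  have "(\<Sum>q | ordered_forest n q \<and> ?E p \<subseteq> ?E q. R_series n q w :: 'k)
      = (\<Sum>q\<in>?F. if ?E p \<subseteq> ?E q then R_series n q w else 0)"
  proof -
    have "{q. ordered_forest n q \<and> ?E p \<subseteq> ?E q} = {q \<in> ?F. ?E p \<subseteq> ?E q}" by auto
    then show ?thesis using sum.inter_filter[OF fF] by simp
  qed
  also have "\<dots> = (\<Sum>q\<in>?F. \<Sum>h\<in>?F. if ?E p \<subseteq> ?E q \<and> ?E q \<subseteq> ?E h then (-1) ^ card (?E h - ?E q) * S_series n h w else (0::'k))"
    by (rule sum.cong) (auto simp: R_alt)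
  also have "\<dots> = (\<Sum>h\<in>?F. \<Sum>q\<in>?F. if ?E p \<subseteq> ?E q \<and> ?E q \<subseteq> ?E h then (-1) ^ card (?E h - ?E q) * S_series n h w else (0::'k))"
    by (rule sum.swap)
  also have "\<dots> = (\<Sum>h\<in>?F. if h = p then S_series n h w else 0)"
  proof (rule sum.cong)
    fix h assume h: "h \<in> ?F"
    have "(\<Sum>q\<in>?F. if ?E p \<subseteq> ?E q \<and> ?E q \<subseteq> ?E h then (-1) ^ card (?E h - ?E q) * S_series n h w else (0::'k))
        = (\<Sum>q\<in>{q \<in> ?F. ?E p \<subseteq> ?E q \<and> ?E q \<subseteq> ?E h}. (-1) ^ card (?E h - ?E q) * S_series n h w)"
      by (rule sum.inter_filter[OF fF, symmetric])
    also have "\<dots> = (\<Sum>q\<in>{q \<in> ?F. ?E p \<subseteq> ?E q \<and> ?E q \<subseteq> ?E h}. (-1) ^ card (?E h - ?E q)) * S_series n h w"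
      by (rule sum_distrib_right[symmetric])
    also have "(\<Sum>q\<in>{q \<in> ?F. ?E p \<subseteq> ?E q \<and> ?E q \<subseteq> ?E h}. (-1::'k) ^ card (?E h - ?E q)) = (if h = p then 1 else 0)"
    proof (cases "?E p \<subseteq> ?E h")
      case True
      have "{q \<in> ?F. ?E p \<subseteq> ?E q \<and> ?E q \<subseteq> ?E h} = {q. ordered_forest n q \<and> ?E p \<subseteq> ?E q \<and> ?E q \<subseteq> ?E h}" by auto
      then have "(\<Sum>q\<in>{q \<in> ?F. ?E p \<subseteq> ?E q \<and> ?E q \<subseteq> ?E h}. (-1::'k) ^ card (?E h - ?E q))
          = (\<Sum>T | ?E p \<subseteq> T \<and> T \<subseteq> ?E h. (-1::'k) ^ card (?E h - T))"
        using forest_interval[where n=n and b=h and A="?E p" and f="\<lambda>T. (-1::'k) ^ card (?E h - T)"] h by simp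
      also have "\<dots> = (if ?E p = ?E h then 1 else 0)"
        using h by (intro alt_interval(2)[OF forest_edges_finite True]) simp
      finally show ?thesis using edges_inj by auto
    next
      case False
      then have E: "{q \<in> ?F. ?E p \<subseteq> ?E q \<and> ?E q \<subseteq> ?E h} = {}" by auto
      have "h \<noteq> p" using False by auto
      then show ?thesis by (subst E) simp
    qed
    finally show "(\<Sum>q\<in>?F. if ?E p \<subseteq> ?E q \<and> ?E q \<subseteq> ?E h then (-1) ^ card (?E h - ?E q) * S_series n h w else (0::'k))
        = (if h = p then S_series n h w else 0)" by simp
  qed simp
  also have "\<dots> = S_series n p w" using p fF by (simp add: sum.delta')
  finally show ?thesis by simp
qed

lemma part2:
  "fspan ({phi (R_series n p) | n p. ordered_forest n p} :: ((nat \<times> nat) multiset \<Rightarrow> 'k::comm_ring_1) set)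
         = fspan {phi (S_series n p) | n p. ordered_forest n p}"
proof
  let ?R = "{phi (R_series n p) | n p. ordered_forest n p} :: ((nat \<times> nat) multiset \<Rightarrow> 'k) set"
  let ?S = "{phi (S_series n p) | n p. ordered_forest n p} :: ((nat \<times> nat) multiset \<Rightarrow> 'k) set"
  show "fspan ?R \<subseteq> fspan ?S"
  proof (rule fspan_sub, rule subsetI)
    fix f assume "f \<in> ?R"
    then obtain n p where f: "f = phi (R_series n p)" by auto
    let ?Q = "{q. ordered_forest n q \<and> forest_edges p \<subseteq> forest_edges q}"
    have "f = (\<lambda>m. \<Sum>q\<in>?Q. (-1) ^ card (forest_edges q - forest_edges p) * phi (S_series n q) m)"
      unfolding f R_series_def by (rule ext, rule phi_lin[OF forests_finite])
    also have "\<dots> \<in> fspan ?S"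
      by (rule fspan_sum) (auto intro!: fspan_base simp: forests_finite)
    finally show "f \<in> fspan ?S" .
  qed
  show "fspan ?S \<subseteq> fspan ?R"
  proof (rule fspan_sub, rule subsetI)
    fix f assume "f \<in> ?S"
    then obtain n p where f: "f = phi (S_series n p)" and p: "ordered_forest n p" by auto
    let ?Q = "{q. ordered_forest n q \<and> forest_edges p \<subseteq> forest_edges q}"
    have Seq: "S_series n p = (\<lambda>w. \<Sum>q\<in>?Q. 1 * R_series n q w)"
      by (intro ext) (simp add: moebius[OF p])
    have "f = (\<lambda>m. \<Sum>q\<in>?Q. 1 * phi (R_series n q) m)"
      unfolding f Seq by (rule ext, rule phi_lin[OF forests_finite])
    also have "\<dots> \<in> fspan ?R"
      by (rule fspan_sum) (auto intro!: fspan_base simp: forests_finite)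
    finally show "f \<in> fspan ?R" .
  qed
qed



lemma inverse_pair_permutes:
  assumes "\<And>x. f (g x) = x" "\<And>x. g (f x) = x" "\<And>x. x \<notin> S \<Longrightarrow> f x = x"
  shows "f permutes S"
  unfolding permutes_def using assms by metis

lemma conj_conj:
  assumes "\<sigma> permutes S"
  shows "conj (inv \<sigma>) (conj \<sigma> q) = q" "conj \<sigma> (conj (inv \<sigma>) q) = q"
proof -
  note pi = permutes_inverses[OF assms] permutes_inv_inv[OF assms]
  show "conj (inv \<sigma>) (conj \<sigma> q) = q"
  proof
    fix v show "conj (inv \<sigma>) (conj \<sigma> q) v = q v"
      by (cases "q v") (simp_all add: conj_def pi)
  qed
  show "conj \<sigma> (conj (inv \<sigma>) q) = q"
  proof
    fix v show "conj \<sigma> (conj (inv \<sigma>) q) v = q v"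
      by (cases "q v") (simp_all add: conj_def pi)
  qed
qed

definition wperm :: "(nat \<Rightarrow> nat) \<Rightarrow> nat \<Rightarrow> nat" where
  "wperm \<sigma> i = inv \<sigma> (Suc i) - 1"

lemma wperm_permutes:
  assumes "\<sigma> permutes {1..n}"
  shows "wperm \<sigma> permutes {..<n}"
proof (rule inverse_pair_permutes[where g="\<lambda>i. \<sigma> (Suc i) - 1"])
  note pi = permutes_inverses[OF assms]
  have ge1: "inv \<sigma> x \<ge> 1" if "x \<ge> 1" for x
  proof (cases "x \<in> {1..n}")
    case True then show ?thesis using permutes_in_image[OF permutes_inv[OF assms]] by auto
  next
    case False then show ?thesis using permutes_not_in[OF permutes_inv[OF assms]] that by auto
  qed
  have ge1': "\<sigma> x \<ge> 1" if "x \<ge> 1" for x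
  proof (cases "x \<in> {1..n}")
    case True then show ?thesis using permutes_in_image[OF assms] by auto
  next
    case False then show ?thesis using permutes_not_in[OF assms] that by auto
  qed
  fix x
  show "wperm \<sigma> (\<sigma> (Suc x) - 1) = x"
    using ge1'[of "Suc x"] by (simp add: wperm_def pi)
  show "\<sigma> (Suc (wperm \<sigma> x)) - 1 = x"
    using ge1[of "Suc x"] by (simp add: wperm_def pi)
next
  fix x assume "x \<notin> {..<n}"
  then have "Suc x \<notin> {1..n}" by auto
  then show "wperm \<sigma> x = x" using permutes_not_in[OF permutes_inv[OF assms]] by (simp add: wperm_def)
qed

lemma wperm_nth:
  assumes "\<sigma> permutes {1..n}" "length w = n" "j \<in> {1..n}"
  shows "permute_list (wperm \<sigma>) w ! (j - 1) = w ! (inv \<sigma> j - 1)"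
proof -
  have "j - 1 < length w" using assms by auto
  then have "permute_list (wperm \<sigma>) w ! (j - 1) = w ! wperm \<sigma> (j - 1)"
    using permute_list_nth wperm_permutes[OF assms(1)] assms(2) by blast
  moreover have "Suc (j - 1) = j" using assms by auto
  ultimately show ?thesis by (simp add: wperm_def)
qed

lemma S_conj:
  assumes s: "\<sigma> permutes {1..n}" and w: "length w = n" and q: "ordered_forest n q"
  shows "S_series n (conj \<sigma> q) (permute_list (wperm \<sigma>) w) = S_series n q w"
proof -
  let ?w' = "permute_list (wperm \<sigma>) w"
  note pi = permutes_inverses[OF s]
  have set_eq: "set ?w' = set w"
    using mset_permute_list[of "wperm \<sigma>" w] wperm_permutes[OF s] w by (metis set_mset_mset)
  have qd: "l \<in> {1..n} \<and> k \<in> {1..n}" if "q l = Some k" for l k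
    using q that by (auto simp: ordered_forest_def)
  have cd: "l \<in> {1..n} \<and> k \<in> {1..n}" if "conj \<sigma> q l = Some k" for l k
    using forest_conj[OF s q] that by (auto simp: ordered_forest_def)
  have cq: "conj \<sigma> q a = Some b \<longleftrightarrow> q (inv \<sigma> a) = Some (inv \<sigma> b)" for a b
    using edges_conj2[OF s, of a b q] by (simp add: edges_iff)
  have "(\<forall>a b. conj \<sigma> q a = Some b \<longrightarrow> letter_prec (?w' ! (b - 1)) (?w' ! (a - 1)))
      \<longleftrightarrow> (\<forall>l k. q l = Some k \<longrightarrow> letter_prec (w ! (k - 1)) (w ! (l - 1)))"
  proof
    assume H: "\<forall>a b. conj \<sigma> q a = Some b \<longrightarrow> letter_prec (?w' ! (b - 1)) (?w' ! (a - 1))"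
    show "\<forall>l k. q l = Some k \<longrightarrow> letter_prec (w ! (k - 1)) (w ! (l - 1))"
    proof (intro allI impI)
      fix l k assume lk: "q l = Some k"
      then have "conj \<sigma> q (\<sigma> l) = Some (\<sigma> k)" using cq pi by simp
      then have "letter_prec (?w' ! (\<sigma> k - 1)) (?w' ! (\<sigma> l - 1))" using H by blast
      moreover have "\<sigma> k \<in> {1..n}" "\<sigma> l \<in> {1..n}"
        using qd[OF lk] permutes_in_image[OF s] by auto
      ultimately show "letter_prec (w ! (k - 1)) (w ! (l - 1))"
        using wperm_nth[OF s w] pi by simp
    qed
  next
    assume H: "\<forall>l k. q l = Some k \<longrightarrow> letter_prec (w ! (k - 1)) (w ! (l - 1))"
    show "\<forall>a b. conj \<sigma> q a = Some b \<longrightarrow> letter_prec (?w' ! (b - 1)) (?w' ! (a - 1))"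
    proof (intro allI impI)
      fix a b assume ab: "conj \<sigma> q a = Some b"
      then have "letter_prec (w ! (inv \<sigma> b - 1)) (w ! (inv \<sigma> a - 1))" using H cq by blast
      then show "letter_prec (?w' ! (b - 1)) (?w' ! (a - 1))"
        using wperm_nth[OF s w] cd[OF ab] by simp
    qed
  qed
  then show ?thesis unfolding S_series_def using set_eq w by simp
qed

lemma R_conj:
  assumes s: "\<sigma> permutes {1..n}" and w: "length w = n" and p: "ordered_forest n p"
  shows "R_series n (conj \<sigma> p) (permute_list (wperm \<sigma>) w) = (R_series n p w :: 'k::comm_ring_1)"
proof -
  let ?Q = "{q. ordered_forest n q \<and> forest_edges p \<subseteq> forest_edges q}"
  let ?Q' = "{q. ordered_forest n q \<and> forest_edges (conj \<sigma> p) \<subseteq> forest_edges q}"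
  have si: "inv \<sigma> permutes {1..n}" by (rule permutes_inv[OF s])
  have injm: "inj (map_prod \<sigma> \<sigma>)"
    using map_prod_inj_on[OF permutes_inj[OF s] permutes_inj[OF s]] by simp
  have injc: "inj (conj \<sigma>)" by (metis conj_conj(1)[OF s] injI)
  have img: "?Q' = conj \<sigma> ` ?Q"
  proof
    show "conj \<sigma> ` ?Q \<subseteq> ?Q'"
    proof
      fix x assume "x \<in> conj \<sigma> ` ?Q"
      then obtain q where q: "q \<in> ?Q" "x = conj \<sigma> q" by blast
      then show "x \<in> ?Q'" using forest_conj[OF s] by (simp add: edges_conj[OF s] image_mono)
    qed
    show "?Q' \<subseteq> conj \<sigma> ` ?Q"
    proof
      fix q' assume q': "q' \<in> ?Q'"
      let ?q = "conj (inv \<sigma>) q'"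
      have "ordered_forest n ?q" using forest_conj[OF si] q' by auto
      moreover have "forest_edges p \<subseteq> forest_edges ?q"
      proof -
        have "forest_edges (conj (inv \<sigma>) (conj \<sigma> p)) \<subseteq> forest_edges ?q"
          using q' edges_conj[OF si] by auto
        then show ?thesis using conj_conj(1)[OF s] by simp
      qed
      ultimately show "q' \<in> conj \<sigma> ` ?Q" using conj_conj(2)[OF s, of q'] by (metis (mono_tags, lifting) image_eqI mem_Collect_eq)
    qed
  qed
  have "R_series n (conj \<sigma> p) (permute_list (wperm \<sigma>) w)
      = (\<Sum>q'\<in>conj \<sigma> ` ?Q. (-1) ^ card (forest_edges q' - forest_edges (conj \<sigma> p)) * S_series n q' (permute_list (wperm \<sigma>) w) :: 'k)"
    unfolding R_series_def img ..
  also have "\<dots> = (\<Sum>q\<in>?Q. (-1) ^ card (forest_edges (conj \<sigma> q) - forest_edges (conj \<sigma> p)) * S_series n (conj \<sigma> q) (permute_list (wperm \<sigma>) w))"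
    using sum.reindex[OF inj_on_subset[OF injc subset_UNIV, of ?Q]] by (simp add: o_def)
  also have "\<dots> = (\<Sum>q\<in>?Q. (-1) ^ card (forest_edges q - forest_edges p) * S_series n q w)"
  proof (rule sum.cong)
    fix q assume q: "q \<in> ?Q"
    have "forest_edges (conj \<sigma> q) - forest_edges (conj \<sigma> p) = map_prod \<sigma> \<sigma> ` (forest_edges q - forest_edges p)"
      using edges_conj[OF s] injm by (simp add: image_set_diff)
    then have "card (forest_edges (conj \<sigma> q) - forest_edges (conj \<sigma> p)) = card (forest_edges q - forest_edges p)"
      using injm by (simp add: card_image inj_on_subset)
    show "(-1) ^ card (forest_edges (conj \<sigma> q) - forest_edges (conj \<sigma> p)) * S_series n (conj \<sigma> q) (permute_list (wperm \<sigma>) w)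
       = ((-1) ^ card (forest_edges q - forest_edges p) * S_series n q w :: 'k)"
    proof -
      have "ordered_forest n q" using q by simp
      then show ?thesis using \<open>card _ = _\<close> by (simp add: S_conj[OF s w])
    qed
  qed simp
  finally show ?thesis unfolding R_series_def by simp
qed

lemma R_wrong_length:
  assumes "length w \<noteq> n" shows "R_series n p w = 0"
  using assms by (simp add: R_series_def S_series_def)

lemma part1:
  assumes p: "ordered_forest n p" and p': "ordered_forest n p'" and su: "same_underlying n p p'"
  shows "phi (R_series n p) = (phi (R_series n p') :: (nat \<times> nat) multiset \<Rightarrow> 'k::comm_ring_1)"
proof -
  obtain \<sigma>0 where b0: "bij_betw \<sigma>0 {1..n} {1..n}" and h0: "\<forall>l\<in>{1..n}. p' (\<sigma>0 l) = map_option \<sigma>0 (p l)"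
    using su by (auto simp: same_underlying_def)
  define \<sigma> where "\<sigma> = (\<lambda>v. if v \<in> {1..n} then \<sigma>0 v else v)"
  have \<sigma>_eq: "\<And>v. v \<in> {1..n} \<Longrightarrow> \<sigma> v = \<sigma>0 v" by (simp add: \<sigma>_def)
  then have b: "bij_betw \<sigma> {1..n} {1..n}" using b0 bij_betw_cong[of "{1..n}" \<sigma> \<sigma>0 "{1..n}"] by simp
  have s: "\<sigma> permutes {1..n}" by (rule bij_imp_permutes[OF b]) (auto simp: \<sigma>_def)
  note pi = permutes_inverses[OF s]
  have pdom: "l \<in> {1..n} \<and> k \<in> {1..n}" if "p l = Some k" for l k using p that by (auto simp: ordered_forest_def)
  have p'dom: "l \<in> {1..n}" if "p' l = Some k" for l k using p' that by (auto simp: ordered_forest_def)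
  have p'eq: "p' = conj \<sigma> p"
  proof
    fix v show "p' v = conj \<sigma> p v"
    proof (cases "v \<in> {1..n}")
      case True
      let ?l = "inv \<sigma> v"
      have l: "?l \<in> {1..n}" using True permutes_in_image[OF permutes_inv[OF s]] by auto
      have "\<sigma>0 ?l = v" using l pi \<sigma>_eq[of ?l] by simp
      then have "p' v = p' (\<sigma>0 ?l)" by simp
      also have "\<dots> = map_option \<sigma>0 (p ?l)" using h0 l by blast
      also have "\<dots> = map_option \<sigma> (p ?l)" using pdom \<sigma>_eq by (cases "p ?l") auto
      finally show ?thesis by (simp add: conj_def)
    next
      case False
      then have "p' v = None" using p'dom by (meson not_Some_eq)
      moreover have "inv \<sigma> v = v" using False permutes_not_in[OF permutes_inv[OF s]] by simp
      moreover have "p v = None" using False pdom by (meson not_Some_eq)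
      ultimately show ?thesis by (simp add: conj_def)
    qed
  qed
  show ?thesis
  proof
    fix m :: "(nat \<times> nat) multiset"
    let ?W = "{w. mset w = m}"
    show "phi (R_series n p) m = (phi (R_series n p') m :: 'k)"
    proof (cases "size m = n")
      case False
      then have "\<forall>w\<in>?W. length w \<noteq> n" by auto
      then show ?thesis unfolding phi_def by (simp add: R_wrong_length)
    next
      case True
      let ?f = "permute_list (wperm \<sigma>)"
      have wp: "wperm \<sigma> permutes {..<n}" by (rule wperm_permutes[OF s])
      have lenW: "length w = n" if "w \<in> ?W" for w using that True by auto
      have inj: "inj_on ?f ?W"
      proof (rule inj_onI)
        fix x y assume x: "x \<in> ?W" and y: "y \<in> ?W" and e: "?f x = ?f y"
        have "permute_list (inv (wperm \<sigma>)) (?f x) = x" if "length x = n" for x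
          using permute_list_compose[of "inv (wperm \<sigma>)" x "wperm \<sigma>"] permutes_inv[OF wp] that
            permutes_inv_o(1)[OF wp]
          by (metis length_permute_list permute_list_compose permute_list_id permutes_inv_o(2) wp)
        then show "x = y" using e lenW[OF x] lenW[OF y] by metis
      qed
      have sub: "?f ` ?W \<subseteq> ?W" using lenW wp by auto
      have bij: "?f ` ?W = ?W" by (rule endo_inj_surj[OF words_finite sub inj])
      have "phi (R_series n p') m = (\<Sum>w\<in>?f ` ?W. R_series n p' w :: 'k)"
        unfolding phi_def bij ..
      also have "\<dots> = (\<Sum>w\<in>?W. R_series n p' (?f w))" using sum.reindex[OF inj, of "R_series n p'"] by (simp add: o_def)
      also have "\<dots> = (\<Sum>w\<in>?W. R_series n p w)"
        using R_conj[OF s _ p] lenW p'eq by (intro sum.cong) auto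
      finally show ?thesis by (simp add: phi_def)
    qed
  qed
qed



definition anc :: "(nat \<Rightarrow> nat option) \<Rightarrow> nat \<Rightarrow> nat set" where
  "anc p l = {k. (l,k) \<in> (forest_edges p)\<^sup>+}"

definition fv :: "(nat \<Rightarrow> nat option) \<Rightarrow> nat \<Rightarrow> nat \<Rightarrow> nat" where
  "fv p n v = v + n * card (anc p v)"

definition letF :: "(nat \<Rightarrow> nat option) \<Rightarrow> nat \<Rightarrow> nat \<Rightarrow> nat \<times> nat" where
  "letF p n v = ((case p v of None \<Rightarrow> 0 | Some k \<Rightarrow> fv p n k), fv p n v)"

definition wF :: "(nat \<Rightarrow> nat option) \<Rightarrow> nat \<Rightarrow> (nat \<times> nat) list" where
  "wF p n = map (\<lambda>i. letF p n (Suc i)) [0..<n]"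

lemma anc_sub:
  assumes "ordered_forest n p" shows "anc p l \<subseteq> {1..n}"
proof
  fix k assume "k \<in> anc p l"
  then have "(l,k) \<in> (forest_edges p)\<^sup>+" by (simp add: anc_def)
  then obtain l' where "(l',k) \<in> forest_edges p" by (induction rule: trancl_induct) auto
  then show "k \<in> {1..n}" using assms by (auto simp: ordered_forest_def forest_edges_def)
qed

lemma anc_step:
  assumes "ordered_forest n p" "p l = Some k"
  shows "card (anc p l) \<ge> Suc (card (anc p k))"
proof -
  have e: "(l,k) \<in> forest_edges p" using assms by (simp add: edges_iff)
  have "insert k (anc p k) \<subseteq> anc p l"
    using e by (auto simp: anc_def intro: trancl_into_trancl2)
  moreover have "k \<notin> anc p k" using assms(1) by (auto simp: anc_def ordered_forest_def acyclic_def)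
  moreover have "finite (anc p l)" "finite (anc p k)" using anc_sub[OF assms(1)] finite_subset by blast+
  ultimately show ?thesis by (metis card_insert_disjoint card_mono)
qed

lemma arith_inj:
  fixes a b n x y :: nat
  assumes "1 \<le> a" "a \<le> n" "1 \<le> b" "b \<le> n" "a + n * x = b + n * y"
  shows "a = b"
proof (cases x y rule: linorder_cases)
  case less
  then have "n * y \<ge> n * x + n" by (metis add.commute mult_Suc_right mult_le_mono2 Suc_leI)
  then show ?thesis using assms by linarith
next
  case greater
  then have "n * x \<ge> n * y + n" by (metis add.commute mult_Suc_right mult_le_mono2 Suc_leI)
  then show ?thesis using assms by linarith
qed (use assms in simp)

context
  fixes n :: nat and p :: "nat \<Rightarrow> nat option"
  assumes pf: "ordered_forest n p"
begin

lemma pdom: "p l = Some k \<Longrightarrow> l \<in> {1..n} \<and> k \<in> {1..n}"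
  using pf by (auto simp: ordered_forest_def)

lemma fv_ge1: "v \<ge> 1 \<Longrightarrow> fv p n v \<ge> 1" by (simp add: fv_def)

lemma fv_less: "p l = Some k \<Longrightarrow> fv p n k < fv p n l"
proof -
  assume lk: "p l = Some k"
  have c: "card (anc p l) \<ge> Suc (card (anc p k))" by (rule anc_step[OF pf lk])
  then have "n * card (anc p l) \<ge> n * card (anc p k) + n" by (metis add.commute mult_Suc_right mult_le_mono2)
  moreover have "1 \<le> l" "k \<le> n" using pdom[OF lk] by auto
  ultimately show ?thesis by (simp add: fv_def)
qed

lemma fv_inj: "a \<in> {1..n} \<Longrightarrow> b \<in> {1..n} \<Longrightarrow> fv p n a = fv p n b \<Longrightarrow> a = b"
  unfolding fv_def by (rule arith_inj) auto

lemma letF_valid: "v \<in> {1..n} \<Longrightarrow> fst (letF p n v) < snd (letF p n v)"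
  using fv_less fv_ge1[of v] by (cases "p v") (auto simp: letF_def)

lemma letF_prec:
  assumes "a \<in> {1..n}" "b \<in> {1..n}"
  shows "letter_prec (letF p n b) (letF p n a) \<longleftrightarrow> p a = Some b"
proof (cases "p a")
  case None
  then show ?thesis using fv_ge1[of b] assms by (auto simp: letF_def letter_prec_def)
next
  case (Some k)
  then have "k \<in> {1..n}" using pdom by blast
  then show ?thesis using Some fv_inj[of b k] assms by (auto simp: letF_def letter_prec_def)
qed

end

lemma R_tau:
  assumes pf: "ordered_forest n p" and G: "ordered_forest n G" and t: "\<tau> permutes {1..n}" and w: "length w = n"
    and wn: "\<forall>j\<in>{1..n}. w ! (j - 1) = letF p n (\<tau> j)"
  shows "R_series n G w = (if G = conj (inv \<tau>) p then 1 else (0::'k::comm_ring_1))"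
proof -
  let ?c = "conj (inv \<tau>) p"
  have ti: "inv \<tau> permutes {1..n}" by (rule permutes_inv[OF t])
  have cf: "ordered_forest n ?c" by (rule forest_conj[OF ti pf])
  have cE: "(l,k) \<in> forest_edges ?c \<longleftrightarrow> p (\<tau> l) = Some (\<tau> k)" for l k
    using edges_conj2[OF ti, of l k p] permutes_inv_inv[OF t] by (simp add: edges_iff)
  have tin: "\<tau> j \<in> {1..n} \<longleftrightarrow> j \<in> {1..n}" for j by (rule permutes_in_image[OF t])
  have valid: "\<forall>a\<in>set w. fst a < snd a"
  proof
    fix a assume "a \<in> set w"
    then obtain i where i: "i < n" "a = w ! i" using w by (auto simp: in_set_conv_nth)
    then have "a = letF p n (\<tau> (Suc i))" using wn by (metis Suc_leI atLeastAtMost_iff diff_Suc_1 le_add1 plus_1_eq_Suc)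
    moreover have "\<tau> (Suc i) \<in> {1..n}" using tin i by auto
    ultimately show "fst a < snd a" using letF_valid[OF pf] by simp
  qed
  have S: "S_series n h w = (if forest_edges h \<subseteq> forest_edges ?c then 1 else (0::'k))" if h: "ordered_forest n h" for h
  proof -
    have hd: "l \<in> {1..n} \<and> k \<in> {1..n}" if "h l = Some k" for l k using h that by (auto simp: ordered_forest_def)
    have "(\<forall>l k. h l = Some k \<longrightarrow> letter_prec (w ! (k - 1)) (w ! (l - 1)))
        \<longleftrightarrow> forest_edges h \<subseteq> forest_edges ?c"
    proof -
      have "letter_prec (w ! (k - 1)) (w ! (l - 1)) \<longleftrightarrow> (l,k) \<in> forest_edges ?c" if "h l = Some k" for l k
        using hd[OF that] wn letF_prec[OF pf] tin cE by simp
      then show ?thesis by (auto simp: forest_edges_def)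
    qed
    then show ?thesis unfolding S_series_def using w valid by simp
  qed
  have "R_series n G w = (\<Sum>h\<in>{h. ordered_forest n h \<and> forest_edges G \<subseteq> forest_edges h}.
          if forest_edges h \<subseteq> forest_edges ?c then (-1) ^ card (forest_edges h - forest_edges G) else (0::'k))"
    unfolding R_series_def by (rule sum.cong) (auto simp: S)
  also have "\<dots> = (\<Sum>h\<in>{h \<in> {h. ordered_forest n h \<and> forest_edges G \<subseteq> forest_edges h}. forest_edges h \<subseteq> forest_edges ?c}.
          (-1) ^ card (forest_edges h - forest_edges G))"
    by (rule sum.inter_filter[OF forests_finite, symmetric])
  also have "{h \<in> {h. ordered_forest n h \<and> forest_edges G \<subseteq> forest_edges h}. forest_edges h \<subseteq> forest_edges ?c}
      = {h. ordered_forest n h \<and> forest_edges G \<subseteq> forest_edges h \<and> forest_edges h \<subseteq> forest_edges ?c}" by auto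
  also have "(\<Sum>h\<in>\<dots>. (-1) ^ card (forest_edges h - forest_edges G))
      = (\<Sum>T | forest_edges G \<subseteq> T \<and> T \<subseteq> forest_edges ?c. (-1::'k) ^ card (T - forest_edges G))"
    by (rule forest_interval[OF cf])
  also have "\<dots> = (if G = ?c then 1 else 0)"
  proof (cases "forest_edges G \<subseteq> forest_edges ?c")
    case True
    show ?thesis using alt_interval(1)[OF forest_edges_finite[OF cf] True] edges_inj by auto
  next
    case False
    then have E: "{T. forest_edges G \<subseteq> T \<and> T \<subseteq> forest_edges ?c} = {}" by auto
    have "G \<noteq> ?c" using False by auto
    then show ?thesis by (subst E) simp
  qed
  finally show ?thesis .
qed

lemma wF_len: "length (wF p n) = n" by (simp add: wF_def)

lemma wF_nth: "j \<in> {1..n} \<Longrightarrow> wF p n ! (j - 1) = letF p n j"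
  by (auto simp: wF_def)

lemma R_self: assumes pf: "ordered_forest n p" shows "R_series n p (wF p n) = (1::'k::comm_ring_1)"
proof -
  have "R_series n p (wF p n) = (if p = conj (inv id) p then 1 else (0::'k))"
  proof (rule R_tau[OF pf pf permutes_id wF_len], rule ballI)
    fix j assume j: "j \<in> {1..n}"
    show "wF p n ! (j - 1) = letF p n (id j)" using wF_nth[OF j] by simp
  qed
  moreover have "conj (inv id) p = p" by (simp add: conj_def inv_id option.map_id)
  ultimately show ?thesis by simp
qed

lemma R_at:
  assumes pf: "ordered_forest n p" and G: "ordered_forest n G" and w: "mset w = mset (wF p n)"
  shows "\<exists>\<sigma>. \<sigma> permutes {1..n} \<and> R_series n G w = (if G = conj \<sigma> p then 1 else (0::'k::comm_ring_1))"
proof -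
  obtain \<pi> where pi: "\<pi> permutes {..<length (wF p n)}" "permute_list \<pi> (wF p n) = w"
    using mset_eq_permutation[OF w] by blast
  have pi': "\<pi> permutes {..<n}" using pi(1) wF_len by simp
  define \<tau> where "\<tau> = (\<lambda>v. if v \<in> {1..n} then Suc (\<pi> (v - 1)) else v)"
  have t: "\<tau> permutes {1..n}"
  proof (rule inverse_pair_permutes[where g="\<lambda>v. if v \<in> {1..n} then Suc (inv \<pi> (v - 1)) else v"])
    note pinv = permutes_inverses[OF pi']
    have a: "\<pi> i < n \<longleftrightarrow> i < n" for i using permutes_in_image[OF pi'] by simp
    have b: "inv \<pi> i < n \<longleftrightarrow> i < n" for i using permutes_in_image[OF permutes_inv[OF pi']] by simp
    fix x
    show "\<tau> (if x \<in> {1..n} then Suc (inv \<pi> (x - 1)) else x) = x"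
      using b[of "x - 1"] by (auto simp: \<tau>_def pinv)
    show "(if \<tau> x \<in> {1..n} then Suc (inv \<pi> (\<tau> x - 1)) else \<tau> x) = x"
      using a[of "x - 1"] by (auto simp: \<tau>_def pinv)
  next
    fix x :: nat assume x: "x \<notin> {1..n}"
    show "\<tau> x = x" unfolding \<tau>_def by (rule if_not_P[OF x])
  qed
  have lw: "length w = n" using pi(2) wF_len by auto
  have wn: "\<forall>j\<in>{1..n}. w ! (j - 1) = letF p n (\<tau> j)"
  proof
    fix j assume j: "j \<in> {1..n}"
    have jl: "j - 1 < length (wF p n)" using j wF_len by auto
    have jn: "j - 1 \<in> {..<n}" using j by auto
    have lt: "\<pi> (j - 1) < n" using permutes_in_image[OF pi', of "j - 1"] jn by simp
    have "w ! (j - 1) = wF p n ! \<pi> (j - 1)" using permute_list_nth[OF pi(1) jl] pi(2) by simp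
    also have "\<dots> = letF p n (Suc (\<pi> (j - 1)))" using lt by (simp add: wF_def)
    also have "\<dots> = letF p n (\<tau> j)" using j by (simp add: \<tau>_def)
    finally show "w ! (j - 1) = letF p n (\<tau> j)" .
  qed
  have "R_series n G w = (if G = conj (inv \<tau>) p then 1 else (0::'k))" by (rule R_tau[OF pf G t lw wn])
  then show ?thesis using permutes_inv[OF t] by blast
qed

lemma conj_same: "\<sigma> permutes {1..n} \<Longrightarrow> same_underlying n p (conj \<sigma> p)"
  unfolding same_underlying_def
  by (rule exI[of _ \<sigma>]) (simp add: permutes_imp_bij conj_def permutes_inverses)

lemma phi_off:
  assumes pf: "ordered_forest n p" and G: "ordered_forest n G" and ns: "\<not> same_underlying n p G"
  shows "phi (R_series n G) (mset (wF p n)) = (0::'k::comm_ring_1)"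
  unfolding phi_def
proof (rule sum.neutral, rule ballI)
  fix w assume "w \<in> {w. mset w = mset (wF p n)}"
  then have wm: "mset w = mset (wF p n)" by simp
  obtain \<sigma> where s: "\<sigma> permutes {1..n}" and R: "R_series n G w = (if G = conj \<sigma> p then 1 else (0::'k))"
    using R_at[OF pf G wm] by blast
  have "G \<noteq> conj \<sigma> p" using conj_same[OF s] ns by auto
  then show "R_series n G w = (0::'k)" using R by simp
qed

lemma phi_diag: assumes pf: "ordered_forest n p" shows "phi (R_series n p) (mset (wF p n)) \<noteq> (0::'k::field_char_0)"
proof -
  let ?W = "{w. mset w = mset (wF p n)}"
  have b: "(R_series n p w :: 'k) = 0 \<or> R_series n p w = (1::'k)" if "w \<in> ?W" for w
  proof -
    have wm: "mset w = mset (wF p n)" using that by simp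
    obtain \<sigma> where R: "R_series n p w = (if p = conj \<sigma> p then 1 else (0::'k))"
      using R_at[OF pf pf wm] by blast
    show ?thesis using R by (cases "p = conj \<sigma> p") simp_all
  qed
  have "(phi (R_series n p) (mset (wF p n)) :: 'k) = (\<Sum>w\<in>?W. if R_series n p w = (1::'k) then (1::'k) else 0)"
    unfolding phi_def by (rule sum.cong) (use b in auto)
  also have "\<dots> = (\<Sum>w\<in>{w \<in> ?W. R_series n p w = (1::'k)}. (1::'k))"
    by (rule sum.inter_filter[OF words_finite, symmetric])
  also have "\<dots> = of_nat (card {w \<in> ?W. R_series n p w = (1::'k)})" by simp
  finally have e: "(phi (R_series n p) (mset (wF p n)) :: 'k) = of_nat (card {w \<in> ?W. R_series n p w = (1::'k)})" .
  have mem: "wF p n \<in> {w \<in> ?W. R_series n p w = (1::'k)}" by (simp add: R_self[OF pf])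
  have fin: "finite {w \<in> ?W. R_series n p w = (1::'k)}" by (rule finite_subset[OF _ words_finite]) auto
  have ne: "{w \<in> ?W. R_series n p w = (1::'k)} \<noteq> {}" using mem by blast
  have "card {w \<in> ?W. R_series n p w = (1::'k)} > 0" using fin ne by (simp add: card_gt_0_iff)
  then have "card {w \<in> ?W. R_series n p w = (1::'k)} \<noteq> 0" by simp
  then show ?thesis using e by simp
qed


lemma part3:
  fixes I :: "(nat \<times> (nat \<Rightarrow> nat option)) set" and c :: "_ \<Rightarrow> 'k::field_char_0"
  assumes fin: "finite I" and fo: "\<forall>x\<in>I. ordered_forest (fst x) (snd x)"
    and di: "\<forall>x\<in>I. \<forall>y\<in>I. x \<noteq> y \<longrightarrow> \<not> (fst x = fst y \<and> same_underlying (fst x) (snd x) (snd y))"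
    and z: "\<forall>m. (\<Sum>x\<in>I. c x * phi (R_series (fst x) (snd x)) m) = 0"
  shows "\<forall>x\<in>I. c x = 0"
proof
  fix x0 assume x0: "x0 \<in> I"
  obtain n0 p0 where x0e: "x0 = (n0, p0)" by (cases x0)
  have f0: "ordered_forest n0 p0" using fo x0 x0e by auto
  let ?m = "mset (wF p0 n0)"
  have off: "c y * phi (R_series (fst y) (snd y)) ?m = 0" if y: "y \<in> I - {x0}" for y
  proof (cases "fst y = n0")
    case True
    have "\<not> same_underlying n0 p0 (snd y)" using di x0 y x0e True by auto
    moreover have "ordered_forest n0 (snd y)" using fo y True by auto
    ultimately show ?thesis using True by (simp add: phi_off[OF f0])
  next
    case False
    have "phi (R_series (fst y) (snd y)) ?m = (0::'k)"
      unfolding phi_def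
    proof (rule sum.neutral, rule ballI)
      fix w assume "w \<in> {w. mset w = ?m}"
      then have "mset w = mset (wF p0 n0)" by simp
      then have "length w = length (wF p0 n0)" by (rule mset_eq_length)
      then have "length w = n0" by (simp add: wF_len)
      then show "R_series (fst y) (snd y) w = (0::'k)" using False by (simp add: R_wrong_length)
    qed
    then show ?thesis by simp
  qed
  have "0 = (\<Sum>x\<in>I. c x * phi (R_series (fst x) (snd x)) ?m)" using z by simp
  also have "\<dots> = c x0 * phi (R_series (fst x0) (snd x0)) ?m + (\<Sum>x\<in>I - {x0}. c x * phi (R_series (fst x) (snd x)) ?m)"
    by (rule sum.remove[OF fin x0])
  also have "(\<Sum>x\<in>I - {x0}. c x * phi (R_series (fst x) (snd x)) ?m) = 0"
    using off by (intro sum.neutral) blast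
  finally have "c x0 * phi (R_series n0 p0) ?m = 0" using x0e by simp
  moreover have "phi (R_series n0 p0) ?m \<noteq> (0::'k)" by (rule phi_diag[OF f0])
  ultimately show "c x0 = 0" by simp
qed


theorem mainTheorem10:
  shows "(\<forall>n p p'. ordered_forest n p \<and> ordered_forest n p' \<and> same_underlying n p p' \<longrightarrow>
             phi (R_series n p) = (phi (R_series n p') :: (nat \<times> nat) multiset \<Rightarrow> 'k::field_char_0))
       \<and> fspan ({phi (R_series n p) | n p. ordered_forest n p} :: ((nat \<times> nat) multiset \<Rightarrow> 'k) set)
         = fspan {phi (S_series n p) | n p. ordered_forest n p}
       \<and> (\<forall>(I :: (nat \<times> (nat \<Rightarrow> nat option)) set) (c :: _ \<Rightarrow> 'k).
            finite I \<and> (\<forall>x\<in>I. ordered_forest (fst x) (snd x))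
            \<and> (\<forall>x\<in>I. \<forall>y\<in>I. x \<noteq> y \<longrightarrow> \<not> (fst x = fst y \<and> same_underlying (fst x) (snd x) (snd y)))
            \<and> (\<forall>m. (\<Sum>x\<in>I. c x * phi (R_series (fst x) (snd x)) m) = 0)
            \<longrightarrow> (\<forall>x\<in>I. c x = 0))"
  proof (intro conjI)
  show "\<forall>n p p'. ordered_forest n p \<and> ordered_forest n p' \<and> same_underlying n p p' \<longrightarrow>
             phi (R_series n p) = (phi (R_series n p') :: (nat \<times> nat) multiset \<Rightarrow> 'k::field_char_0)"
    by (intro allI impI, elim conjE, rule part1; assumption)
  show "fspan ({phi (R_series n p) | n p. ordered_forest n p} :: ((nat \<times> nat) multiset \<Rightarrow> 'k) set)
         = fspan {phi (S_series n p) | n p. ordered_forest n p}"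
    by (rule part2)
  show "\<forall>(I :: (nat \<times> (nat \<Rightarrow> nat option)) set) (c :: _ \<Rightarrow> 'k).
            finite I \<and> (\<forall>x\<in>I. ordered_forest (fst x) (snd x))
            \<and> (\<forall>x\<in>I. \<forall>y\<in>I. x \<noteq> y \<longrightarrow> \<not> (fst x = fst y \<and> same_underlying (fst x) (snd x) (snd y)))
            \<and> (\<forall>m. (\<Sum>x\<in>I. c x * phi (R_series (fst x) (snd x)) m) = 0)
            \<longrightarrow> (\<forall>x\<in>I. c x = 0)"
    by (intro allI impI, elim conjE, rule part3; assumption)
qed

end
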